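(* Let $R$ be a ring with identity and involution $*$, and let $a,b\in R$ be dual core invertible with dual core inverses $a_{\oplus}$ and $b_{\oplus}$. If $ab=0=ba$ and $ab^*=0$, then $a+b$ is dual core invertible and $(a+b)_{\oplus}=a_{\oplus}+b_{\oplus}$.
   Context: An involution on $R$ satisfies $(a^* )^*=a$, $(ab)^*=b^*a^*$, $(a+b)^*=a^*+b^*$. An element $x\in R$ is a dual core inverse of $a$ if $axa=a$, $xR=a^*R$ and $Rx=Ra$; it is unique when it exists and is denoted $a_{\oplus}$. *)

theory Defs
  imports Main
begin

definition involution :: "('a::ring_1 \<Rightarrow> 'a) \<Rightarrow> bool" where
  "involution star \<longleftrightarrow> (\<forall>a. star (star a) = a) \<and> (\<forall>a b. star (a * b) = star b * star a)
     \<and> (\<forall>a b. star (a + b) = star a + star b)"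

definition right_ideal_gen :: "'a::ring_1 \<Rightarrow> 'a set" where
  "right_ideal_gen x = {x * r | r. True}"

definition left_ideal_gen :: "'a::ring_1 \<Rightarrow> 'a set" where
  "left_ideal_gen x = {r * x | r. True}"

definition is_dual_core_inverse :: "('a::ring_1 \<Rightarrow> 'a) \<Rightarrow> 'a \<Rightarrow> 'a \<Rightarrow> bool" where
  "is_dual_core_inverse star a x \<longleftrightarrow> a * x * a = a
     \<and> right_ideal_gen x = right_ideal_gen (star a) \<and> left_ideal_gen x = left_ideal_gen a"

definition dual_core_invertible :: "('a::ring_1 \<Rightarrow> 'a) \<Rightarrow> 'a \<Rightarrow> bool" where
  "dual_core_invertible star a \<longleftrightarrow> (\<exists>x. is_dual_core_inverse star a x)"

definition dual_core_inv :: "('a::ring_1 \<Rightarrow> 'a) \<Rightarrow> 'a \<Rightarrow> 'a" where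
  "dual_core_inv star a = (THE x. is_dual_core_inverse star a x)"

end

theory Submission
  imports Defs
begin

lemma inv_zero:
  assumes "involution star" shows "star (0::'a::ring_1) = 0"
proof -
  have "star (0 + 0) = star 0 + star 0" using assms unfolding involution_def by blast
  thus ?thesis by simp
qed

lemma self_right: "x \<in> right_ideal_gen (x::'a::ring_1)"
  unfolding right_ideal_gen_def by (rule CollectI, rule exI[of _ 1], simp)

lemma self_left: "x \<in> left_ideal_gen (x::'a::ring_1)"
  unfolding left_ideal_gen_def by (rule CollectI, rule exI[of _ 1], simp)

lemma dci_parts:
  assumes "is_dual_core_inverse star a x"
  shows "a * x * a = a" "right_ideal_gen x = right_ideal_gen (star a)" "left_ideal_gen x = left_ideal_gen a"
  using assms unfolding is_dual_core_inverse_def by simp_all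

lemma dci_eqs:
  assumes inv: "involution star" and d: "is_dual_core_inverse star (a::'a::ring_1) x"
  shows "a * x * a = a \<and> x * a * x = x \<and> star (x * a) = x * a \<and> x * x * a = x \<and> a * a * x = a"
proof -
  have ss: "\<And>p. star (star p) = p" and sm: "\<And>p q. star (p * q) = star q * star p"
    using inv unfolding involution_def by auto
  have axa: "a * x * a = a" by (rule dci_parts(1)[OF d])
  have "x \<in> right_ideal_gen (star a)" using self_right[of x] unfolding dci_parts(2)[OF d] .
  then obtain u where u: "x = star a * u" unfolding right_ideal_gen_def by blast
  have "x \<in> left_ideal_gen a" using self_left[of x] unfolding dci_parts(3)[OF d] .
  then obtain w where w: "x = w * a" unfolding left_ideal_gen_def by blast
  have "a \<in> left_ideal_gen x" using self_left[of a] unfolding dci_parts(3)[OF d, symmetric] .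
  then obtain z where z: "a = z * x" unfolding left_ideal_gen_def by blast
  have sa0: "star (a * x * a) = star a * star x * star a" by (simp only: sm mult.assoc)
  have sa: "star a = star a * star x * star a" using sa0 unfolding axa .
  have "x = star a * u" by (rule u)
  also have "\<dots> = star a * star x * star a * u" using sa by (rule arg_cong[where f="\<lambda>t. t * u"])
  also have "\<dots> = star a * star x * (star a * u)" by (simp only: mult.assoc)
  also have "star a * u = x" by (rule u[symmetric])
  finally have x1: "x = star a * star x * x" .
  have "x * x * a = w * (a * x * a)" by (simp only: w mult.assoc)
  also have "\<dots> = w * a" by (simp only: axa)
  also have "w * a = x" by (rule w[symmetric])
  finally have x2: "x * x * a = x" .
  have "x * a = star a * star x * x * a" using x1 by (rule arg_cong[where f="\<lambda>t. t * a"])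
  also have "\<dots> = star (x * a) * (x * a)" by (simp only: mult.assoc sm)
  finally have xa: "x * a = star (x * a) * (x * a)" .
  have "star (x * a) = star (star (x * a) * (x * a))" using xa by (rule arg_cong)
  also have "\<dots> = star (x * a) * (x * a)" by (simp only: sm ss)
  also have "\<dots> = x * a" by (rule xa[symmetric])
  finally have herm: "star (x * a) = x * a" .
  have "x * a * x = star (x * a) * x" by (simp only: herm)
  also have "\<dots> = star a * star x * x" by (simp only: sm)
  also have "\<dots> = x" by (rule x1[symmetric])
  finally have xax: "x * a * x = x" .
  have "a * a * x = z * (x * a * x)" by (simp only: z mult.assoc)
  also have "\<dots> = z * x" by (simp only: xax)
  also have "\<dots> = a" by (rule z[symmetric])
  finally have aax: "a * a * x = a" .
  show ?thesis using axa xax herm x2 aax by blast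
qed

lemma eqs_dci:
  assumes inv: "involution star"
    and h: "a * x * a = a" "x * a * x = x" "star (x * a) = x * a" "x * x * (a::'a::ring_1) = x" "a * a * x = a"
  shows "is_dual_core_inverse star a x"
proof -
  have sm: "\<And>p q. star (p * q) = star q * star p"
    using inv unfolding involution_def by auto
  have "x = x * a * x" by (rule h(2)[symmetric])
  also have "\<dots> = star (x * a) * x" by (simp only: h(3))
  also have "\<dots> = star a * (star x * x)" by (simp only: sm mult.assoc)
  finally have r1: "x = star a * (star x * x)" .
  have "star a = star (a * x * a)" by (simp only: h(1))
  also have "\<dots> = star (x * a) * star a" by (simp only: sm mult.assoc)
  also have "\<dots> = x * (a * star a)" by (simp only: h(3) mult.assoc)
  finally have r2: "star a = x * (a * star a)" .
  have l1: "x = (x * x) * a" by (rule h(4)[symmetric])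
  have l2: "a = (a * a) * x" by (rule h(5)[symmetric])
  have R: "right_ideal_gen x = right_ideal_gen (star a)"
    unfolding right_ideal_gen_def
  proof (intro set_eqI iffI)
    fix t assume "t \<in> {x * r |r. True}" then obtain r where "t = x * r" by blast
    then have "t = (star a * (star x * x)) * r" by (simp only: r1[symmetric])
    then have "t = star a * (star x * x * r)" by (simp only: mult.assoc)
    thus "t \<in> {star a * r |r. True}" by blast
  next
    fix t assume "t \<in> {star a * r |r. True}" then obtain r where "t = star a * r" by blast
    then have "t = (x * (a * star a)) * r" by (simp only: r2[symmetric])
    then have "t = x * (a * star a * r)" by (simp only: mult.assoc)
    thus "t \<in> {x * r |r. True}" by blast
  qed
  have L: "left_ideal_gen x = left_ideal_gen a"
    unfolding left_ideal_gen_def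
  proof (intro set_eqI iffI)
    fix t assume "t \<in> {r * x |r. True}" then obtain r where "t = r * x" by blast
    then have "t = r * ((x * x) * a)" by (simp only: l1[symmetric])
    then have "t = (r * (x * x)) * a" by (simp only: mult.assoc)
    thus "t \<in> {r * a |r. True}" by blast
  next
    fix t assume "t \<in> {r * a |r. True}" then obtain r where "t = r * a" by blast
    then have "t = r * ((a * a) * x)" by (simp only: l2[symmetric])
    then have "t = (r * (a * a)) * x" by (simp only: mult.assoc)
    thus "t \<in> {r * x |r. True}" by blast
  qed
  show ?thesis unfolding is_dual_core_inverse_def using h(1) R L by (intro conjI)
qed

lemma dci_unique:
  assumes inv: "involution star" and dx: "is_dual_core_inverse star (a::'a::ring_1) x"
    and dy: "is_dual_core_inverse star a y"
  shows "x = y"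
proof -
  have sm: "\<And>p q. star (p * q) = star q * star p"
    using inv unfolding involution_def by auto
  note ex = dci_eqs[OF inv dx] and ey = dci_eqs[OF inv dy]
  have ex1: "a * x * a = a" and ex2: "x * a * x = x" and ex3: "star (x * a) = x * a" using ex by auto
  have ey1: "a * y * a = a" and ey2: "y * a * y = y" and ey3: "star (y * a) = y * a" using ey by auto
  have "x * a = star (x * a)" by (simp only: ex3)
  also have "\<dots> = star (x * (a * y * a))" by (simp only: ey1)
  also have "\<dots> = star (y * a) * star (x * a)" by (simp only: sm mult.assoc)
  also have "\<dots> = y * (a * x * a)" by (simp only: ex3 ey3 mult.assoc)
  also have "\<dots> = y * a" by (simp only: ex1)
  finally have xaya: "x * a = y * a" .
  have "x \<in> left_ideal_gen y" using self_left[of x] unfolding dci_parts(3)[OF dx] dci_parts(3)[OF dy] .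
  then obtain s where s: "x = s * y" unfolding left_ideal_gen_def by blast
  have "x = s * (y * a * y)" using s by (simp only: ey2)
  also have "\<dots> = (s * y) * a * y" by (simp only: mult.assoc)
  also have "\<dots> = x * a * y" by (simp only: s)
  also have "\<dots> = y" by (simp only: xaya ey2)
  finally show ?thesis .
qed

lemma dci_the:
  assumes "involution star" "is_dual_core_inverse star (a::'a::ring_1) x"
  shows "dual_core_inv star a = x"
  unfolding dual_core_inv_def proof (rule the_equality) show "is_dual_core_inverse star a x" by (rule assms(2)) next fix y assume "is_dual_core_inverse star a y" thus "y = x" by (rule dci_unique[OF assms(1) _ assms(2)]) qed

theorem corollary4p9:
  fixes star :: "'a::ring_1 \<Rightarrow> 'a" and a b :: 'a
  assumes "involution star"
    and "dual_core_invertible star a" and "dual_core_invertible star b"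
    and "a * b = 0" and "b * a = 0" and "a * star b = 0"
  shows "dual_core_invertible star (a + b)
    \<and> dual_core_inv star (a + b) = dual_core_inv star a + dual_core_inv star b"
proof -
  note inv = assms(1)
  have sm: "\<And>p q. star (p * q) = star q * star p" and sp: "\<And>p q. star (p + q) = star p + star q"
    and ss: "\<And>p. star (star p) = p"
    using inv unfolding involution_def by auto
  obtain x where dx: "is_dual_core_inverse star a x" using assms(2) unfolding dual_core_invertible_def by blast
  obtain y where dy: "is_dual_core_inverse star b y" using assms(3) unfolding dual_core_invertible_def by blast
  have ex1: "a * x * a = a" and ex2: "x * a * x = x" and ex3: "star (x * a) = x * a"
    and ex4: "x * x * a = x" and ex5: "a * a * x = a" using dci_eqs[OF inv dx] by auto
  have ey1: "b * y * b = b" and ey2: "y * b * y = y" and ey3: "star (y * b) = y * b"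
    and ey4: "y * y * b = y" and ey5: "b * b * y = b" using dci_eqs[OF inv dy] by auto
  note ex = ex1 ex2 ex3 ex4 ex5 and ey = ey1 ey2 ey3 ey4 ey5
  have ab: "a * b = 0" "b * a = 0" "a * star b = 0" using assms by auto
  have bsa: "b * star a = 0" proof - have "b * star a = star (a * star b)" by (simp add: sm ss) thus ?thesis using ab(3) inv_zero[OF inv] by simp qed
  have xb: "x * b = 0" proof - have "x * b = x * x * a * b" by (simp only: ex4) thus ?thesis using ab by (simp add: mult.assoc) qed
  have ya: "y * a = 0" proof - have "y * a = y * y * b * a" by (simp only: ey4) thus ?thesis using ab by (simp add: mult.assoc) qed
  have "x = star (x * a) * x" by (simp only: ex3 ex2)
  also have "\<dots> = star a * (star x * x)" by (simp only: sm mult.assoc)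
  finally have x1: "x = star a * (star x * x)" .
  have "y = star (y * b) * y" by (simp only: ey3 ey2)
  also have "\<dots> = star b * (star y * y)" by (simp only: sm mult.assoc)
  finally have y1: "y = star b * (star y * y)" .
  have bx: "b * x = 0" proof - have "b * x = (b * star a) * (star x * x)" by (subst x1) (simp add: mult.assoc) thus ?thesis using bsa by simp qed
  have ay: "a * y = 0" proof - have "a * y = (a * star b) * (star y * y)" by (subst y1) (simp add: mult.assoc) thus ?thesis using ab by simp qed
  have xy: "x * y = 0" proof - have "x * y = x * x * a * y" by (simp only: ex4) thus ?thesis using ay by (simp add: mult.assoc) qed
  have yx: "y * x = 0" proof - have "y * x = y * y * b * x" by (simp only: ey4) thus ?thesis using bx by (simp add: mult.assoc) qed
  have "(a + b) * (x + y) * (a + b) = a * x * a + a * (x * b) + (a * y) * (a + b) + (b * x) * (a + b) + b * (y * a) + b * y * b"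
    by (simp add: algebra_simps)
  also have "\<dots> = a * x * a + b * y * b" using xb ya bx ay by simp
  finally have e1: "(a + b) * (x + y) * (a + b) = a + b" by (simp only: ex1 ey1)
  have "(x + y) * (a + b) * (x + y) = x * a * x + x * (a * y) + (x * b) * (x + y) + (y * a) * (x + y) + y * (b * x) + y * b * y"
    by (simp add: algebra_simps)
  also have "\<dots> = x * a * x + y * b * y" using xb ya bx ay by simp
  finally have e2: "(x + y) * (a + b) * (x + y) = x + y" by (simp only: ex2 ey2)
  have "(x + y) * (a + b) = x * a + y * b" using xb ya by (simp add: algebra_simps)
  moreover have "star (x * a + y * b) = x * a + y * b" by (simp only: sp ex3 ey3)
  ultimately have e3: "star ((x + y) * (a + b)) = (x + y) * (a + b)" by simp
  have "(x + y) * (x + y) * (a + b) = x * x * a + x * (x * b) + y * (y * a) + y * y * b + (x * y) * (a + b) + (y * x) * (a + b)"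
    by (simp add: algebra_simps)
  also have "\<dots> = x * x * a + y * y * b" using xb ya xy yx by simp
  finally have e4: "(x + y) * (x + y) * (a + b) = x + y" by (simp only: ex4 ey4)
  have "(a + b) * (a + b) * (x + y) = a * a * x + a * (a * y) + b * (b * x) + b * b * y + (a * b) * (x + y) + (b * a) * (x + y)"
    by (simp add: algebra_simps)
  also have "\<dots> = a * a * x + b * b * y" using ab bx ay by simp
  finally have e5: "(a + b) * (a + b) * (x + y) = a + b" by (simp only: ex5 ey5)
  have d: "is_dual_core_inverse star (a + b) (x + y)" by (rule eqs_dci[OF inv e1 e2 e3 e4 e5])
  have "dual_core_invertible star (a + b)" unfolding dual_core_invertible_def using d by blast
  moreover have "dual_core_inv star (a + b) = x + y" by (rule dci_the[OF inv d])
  moreover have "dual_core_inv star a = x" by (rule dci_the[OF inv dx])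
  moreover have "dual_core_inv star b = y" by (rule dci_the[OF inv dy])
  ultimately show ?thesis by simp
qed

end
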